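(* Let $c\in\mathbb{C}(t)\cup\{\infty\}$ be a marked point. Then $c$ is persistently preperiodic for the family $f_t$ (i.e. $c(t)$ has finite forward orbit under $f_t$ for all $t\in\mathbb{C}\setminus\{0,1\}$) if and only if $c(t)$ is equal to one of $0,1,\infty,t$.
   Context: $f_t(z)=\frac{(z^2-t)^2}{4z(z-1)(z-t)}$ for $t\in\mathbb{C}\setminus\{0,1\}$ is the degree-4 Lattès family on $\mathbb{P}^1$ (induced by multiplication by 2 on the Legendre curve $y^2=x(x-1)(x-t)$). A marked point is an element $c\in\mathbb{C}(t)\cup\{\infty\}$, viewed as a holomorphic map $\mathbb{C}\setminus\{0,1\}\to\mathbb{P}^1$. *)

theory Defs
  imports "HOL-Computational_Algebra.Computational_Algebra"
          "HOL-Computational_Algebra.Normalized_Fraction"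
          "HOL-Computational_Algebra.Field_as_Ring"
begin

text \<open>The Riemann sphere P^1 is modelled as complex option: Some z is the point z of C,
  None is the point at infinity.\<close>

definition lattes :: "complex \<Rightarrow> complex option \<Rightarrow> complex option" where
  "lattes t w = (case w of
      None \<Rightarrow> None
    | Some z \<Rightarrow> (if 4 * z * (z - 1) * (z - t) = 0 then None
                 else Some ((z\<^sup>2 - t)\<^sup>2 / (4 * z * (z - 1) * (z - t)))))"

text \<open>A marked point: an element of C(t) (fractions of complex polynomials) or infinity (None).\<close>
type_synonym marked_point = "complex poly fract option"

text \<open>Value of a rational function at t in P^1, computed from its reduced representation p/q
  (p, q coprime, q normalized nonzero): infinity exactly at the zeros of q.\<close>
definition eval_ratfun :: "complex poly fract \<Rightarrow> complex \<Rightarrow> complex option" where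
  "eval_ratfun r t = (case quot_of_fract r of (p, q) \<Rightarrow>
      if poly q t = 0 then None else Some (poly p t / poly q t))"

definition eval_marked :: "marked_point \<Rightarrow> complex \<Rightarrow> complex option" where
  "eval_marked c t = (case c of None \<Rightarrow> None | Some r \<Rightarrow> eval_ratfun r t)"

definition persistently_preperiodic :: "marked_point \<Rightarrow> bool" where
  "persistently_preperiodic c \<longleftrightarrow>
     (\<forall>t. t \<noteq> 0 \<and> t \<noteq> 1 \<longrightarrow> finite (range (\<lambda>n. (lattes t ^^ n) (eval_marked c t))))"

end

theory Submission
  imports Defs "HOL-Analysis.Continuum_Not_Denumerable"
begin

definition stepP :: "complex poly \<times> complex poly \<Rightarrow> complex poly \<times> complex poly" where
  "stepP z = (case z of (X,Y) \<Rightarrow> ((X^2 - [:0,1:]*Y^2)^2, 4*X*Y*(X-Y)*(X-[:0,1:]*Y)))"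

lemma step_inv:
  fixes t0 :: complex
  defines "h \<equiv> [:-t0,1:]"
  assumes k: "k > 0" and A: "poly A t0 \<noteq> 0" and B: "poly B t0 \<noteq> 0"
  shows "\<exists>e' A' B'. stepP (h^e*A, h^(e+k)*B) = (h^e'*A', h^(e'+k)*B') \<and>
     poly A' t0 \<noteq> 0 \<and> poly B' t0 \<noteq> 0 \<and> poly B' t0 / poly A' t0 = 4 * (poly B t0 / poly A t0)"
proof -
  define A' where "A' = (A^2 - [:0,1:]*(h^k)^2*B^2)^2"
  define B' where "B' = 4*A*B*(A - h^k*B)*(A - [:0,1:]*h^k*B)"
  have h0: "poly (h^k) t0 = 0" using k by (simp add: h_def)
  have e1: "fst (stepP (h^e*A, h^(e+k)*B)) = (h^e)^4*A'"
  proof -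
    have id: "\<And>x u v a b::complex poly. ((u*a)^2 - x*(u*v*b)^2)^2 = u^4*(a^2 - x*v^2*b^2)^2"
      by algebra
    show ?thesis unfolding stepP_def A'_def
      by (simp only: power_add prod.case fst_conv id)
  qed
  have e2: "snd (stepP (h^e*A, h^(e+k)*B)) = ((h^e)^4*h^k)*B'"
  proof -
    have id: "\<And>x u v a b::complex poly. 4*(u*a)*(u*v*b)*(u*a-u*v*b)*(u*a-x*(u*v*b)) = (u^4*v)*(4*a*b*(a-v*b)*(a-x*v*b))"
      by algebra
    show ?thesis unfolding stepP_def B'_def
      by (simp only: power_add prod.case snd_conv id)
  qed
  have pA: "poly A' t0 = (poly A t0)^4" unfolding A'_def using h0 k by (simp add: power_mult_distrib zero_power power4_eq_xxxx power2_eq_square)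
  have pB: "poly B' t0 = 4 * (poly A t0)^3 * poly B t0" unfolding B'_def using h0
    using k by (simp add: power3_eq_cube zero_power)
  have hh: "(h^e)^4 = h^(4*e)" "(h^e)^4*h^k = h^(4*e+k)"
    by (simp_all add: power_mult[symmetric] power_add mult.commute)
  show ?thesis
    apply (rule exI[of _ "4*e"], rule exI[of _ A'], rule exI[of _ B'])
    using e1 e2 pA pB A B unfolding hh by (auto simp: prod_eq_iff field_simps power3_eq_cube power4_eq_xxxx power_add)
qed

lemma iter_inv:
  fixes t0 :: complex
  defines "h \<equiv> [:-t0,1:]"
  assumes k: "k > 0" and A: "poly A t0 \<noteq> 0" and B: "poly B t0 \<noteq> 0"
  shows "\<exists>e' A' B'. (stepP^^n) (h^e*A, h^(e+k)*B) = (h^e'*A', h^(e'+k)*B') \<and>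
     poly A' t0 \<noteq> 0 \<and> poly B' t0 \<noteq> 0 \<and> poly B' t0 / poly A' t0 = 4^n * (poly B t0 / poly A t0)"
proof (induction n)
  case 0 then show ?case using A B by auto
next
  case (Suc n)
  then obtain e' A' B' where IH: "(stepP^^n) (h^e*A, h^(e+k)*B) = (h^e'*A', h^(e'+k)*B')"
     "poly A' t0 \<noteq> 0" "poly B' t0 \<noteq> 0" "poly B' t0 / poly A' t0 = 4^n * (poly B t0 / poly A t0)"
    by blast
  from step_inv[OF k IH(2,3), of e', folded h_def] obtain e'' A'' B'' where
    S: "stepP (h^e'*A', h^(e'+k)*B') = (h^e''*A'', h^(e''+k)*B'')"
     "poly A'' t0 \<noteq> 0" "poly B'' t0 \<noteq> 0" "poly B'' t0 / poly A'' t0 = 4 * (poly B' t0 / poly A' t0)"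
    by blast
  show ?case
    by (rule exI[of _ e''], rule exI[of _ A''], rule exI[of _ B''])
       (simp add: IH(1) S IH(4))
qed

lemma iter_distinct:
  fixes t0 :: complex
  defines "h \<equiv> [:-t0,1:]"
  assumes k: "k > 0" and A: "poly A t0 \<noteq> 0" and B: "poly B t0 \<noteq> 0" and nm: "n \<noteq> m"
  shows "fst ((stepP^^n) (h^e*A, h^(e+k)*B)) * snd ((stepP^^m) (h^e*A, h^(e+k)*B)) \<noteq>
         fst ((stepP^^m) (h^e*A, h^(e+k)*B)) * snd ((stepP^^n) (h^e*A, h^(e+k)*B))"
proof
  assume eq: "fst ((stepP^^n) (h^e*A, h^(e+k)*B)) * snd ((stepP^^m) (h^e*A, h^(e+k)*B)) =
         fst ((stepP^^m) (h^e*A, h^(e+k)*B)) * snd ((stepP^^n) (h^e*A, h^(e+k)*B))"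
  obtain e1 A1 B1 where I1: "(stepP^^n) (h^e*A, h^(e+k)*B) = (h^e1*A1, h^(e1+k)*B1)"
     "poly A1 t0 \<noteq> 0" "poly B1 t0 \<noteq> 0" "poly B1 t0 / poly A1 t0 = 4^n * (poly B t0 / poly A t0)"
    using iter_inv[OF k A B, of n e] unfolding h_def by blast
  obtain e2 A2 B2 where I2: "(stepP^^m) (h^e*A, h^(e+k)*B) = (h^e2*A2, h^(e2+k)*B2)"
     "poly A2 t0 \<noteq> 0" "poly B2 t0 \<noteq> 0" "poly B2 t0 / poly A2 t0 = 4^m * (poly B t0 / poly A t0)"
    using iter_inv[OF k A B, of m e] unfolding h_def by blast
  have "h^(e1+e2+k) * (A1*B2) = h^(e1+e2+k) * (A2*B1)"
    using eq unfolding I1(1) I2(1) by (simp add: power_add algebra_simps)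
  moreover have "h^(e1+e2+k) \<noteq> 0" by (simp add: h_def)
  ultimately have "A1*B2 = A2*B1" by (metis mult_left_cancel)
  then have "poly A1 t0 * poly B2 t0 = poly A2 t0 * poly B1 t0"
    by (metis poly_mult)
  then have "poly B2 t0 / poly A2 t0 = poly B1 t0 / poly A1 t0"
    using I1(2) I2(2) by (simp add: field_simps)
  then have "(4::complex)^m = 4^n" using I1(4) I2(4) A B by simp
  then have "(4::nat)^m = 4^n" by (metis of_nat_eq_of_nat_power_cancel_iff of_nat_numeral)
  then show False using nm by simp
qed


definition stepC :: "complex \<Rightarrow> complex \<times> complex \<Rightarrow> complex \<times> complex" where
  "stepC t z = (case z of (x,y) \<Rightarrow> ((x^2 - t*y^2)^2, 4*x*y*(x-y)*(x-t*y)))"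

definition pt :: "complex \<times> complex \<Rightarrow> complex option" where
  "pt z = (case z of (x,y) \<Rightarrow> if y = 0 then None else Some (x/y))"

definition ev :: "complex \<Rightarrow> complex poly \<times> complex poly \<Rightarrow> complex \<times> complex" where
  "ev t z = (poly (fst z) t, poly (snd z) t)"

lemma ev_step: "ev t (stepP z) = stepC t (ev t z)"
  by (cases z) (simp add: ev_def stepP_def stepC_def)

lemma ev_iter: "ev t ((stepP^^n) z) = (stepC t ^^ n) (ev t z)"
  by (induction n) (simp_all add: ev_step)

lemma stepC_nz:
  assumes t: "t \<noteq> 0" "t \<noteq> 1" and z: "z \<noteq> (0,0)"
  shows "stepC t z \<noteq> (0,0)"
proof
  obtain x y where xy: "z = (x,y)" by (cases z)
  assume "stepC t z = (0,0)"
  then have a: "(x^2 - t*y^2) = 0" and b: "x*y*(x-y)*(x-t*y) = 0"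
    by (auto simp: stepC_def xy)
  from b have "x = 0 \<or> y = 0 \<or> x = y \<or> x = t*y" by auto
  then have "x = 0 \<and> y = 0"
  proof (elim disjE)
    assume "x = 0" then show ?thesis using a t by auto
  next
    assume "y = 0" then show ?thesis using a by auto
  next
    assume "x = y" then have "(1 - t) * y^2 = 0" using a by (simp add: algebra_simps power2_eq_square)
    then show ?thesis using t \<open>x = y\<close> by auto
  next
    assume "x = t*y" then have "(t*t - t) * y^2 = 0" using a by (simp add: algebra_simps power2_eq_square)
    moreover have "t*t - t \<noteq> 0" using t by (metis eq_iff_diff_eq_0 mult_cancel_right2)
    ultimately show ?thesis using \<open>x = t*y\<close> by auto
  qed
  then show False using z xy by simp
qed

lemma lattes_pt:
  assumes t: "t \<noteq> 0" "t \<noteq> 1" and z: "z \<noteq> (0,0)"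
  shows "lattes t (pt z) = pt (stepC t z)"
proof -
  obtain x y where xy: "z = (x,y)" by (cases z)
  show ?thesis
  proof (cases "y = 0")
    case True
    then have "x \<noteq> 0" using z xy by auto
    then show ?thesis using True by (simp add: xy pt_def stepC_def lattes_def)
  next
    case False
    define w where "w = x / y"
    have x: "x = w*y" using False by (simp add: w_def)
    have d: "4*x*y*(x-y)*(x-t*y) = y^4 * (4*w*(w-1)*(w-t))"
      unfolding x by (simp add: algebra_simps power4_eq_xxxx)
    have n: "(x^2 - t*y^2)^2 = y^4 * (w^2-t)^2"
      unfolding x by (simp add: algebra_simps power4_eq_xxxx power2_eq_square)
    show ?thesis using False
      by (simp add: xy pt_def stepC_def lattes_def d n w_def[symmetric])
  qed
qed

lemma lattes_iter:
  assumes t: "t \<noteq> 0" "t \<noteq> 1" and z: "z \<noteq> (0,0)"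
  shows "(lattes t ^^ n) (pt z) = pt ((stepC t ^^ n) z) \<and> (stepC t ^^ n) z \<noteq> (0,0)"
proof (induction n)
  case 0 then show ?case using z by simp
next
  case (Suc n) then show ?case using lattes_pt[OF t] stepC_nz[OF t] by simp
qed

lemma pt_eq:
  assumes "z \<noteq> (0,0)" "w \<noteq> (0,0)" "pt z = pt w"
  shows "fst z * snd w = fst w * snd z"
  using assms by (cases z; cases w) (auto simp: pt_def split: if_splits simp: field_simps)


lemma infinite_orbit:
  fixes z0 :: "complex poly \<times> complex poly" and t0 :: complex
  assumes nz: "\<And>t. ev t z0 \<noteq> (0,0)" and k: "k > 0" and A: "poly A t0 \<noteq> 0" and B: "poly B t0 \<noteq> 0"
    and N: "(stepP^^N) z0 = ([:-t0,1:]^e*A, [:-t0,1:]^(e+k)*B)"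
  shows "\<exists>t. t \<noteq> 0 \<and> t \<noteq> 1 \<and> infinite (range (\<lambda>n. (lattes t ^^ n) (pt (ev t z0))))"
proof -
  define w where "w = ([:-t0,1:]^e*A, [:-t0,1:]^(e+k)*B)"
  define Z where "Z n = (stepP^^n) w" for n
  define D where "D n m = fst (Z n) * snd (Z m) - fst (Z m) * snd (Z n)" for n m
  have Dnz: "D n m \<noteq> 0" if "n \<noteq> m" for n m
    using iter_distinct[OF k A B that, of e] unfolding D_def Z_def w_def by simp
  define Bad where "Bad = (\<Union>p\<in>{p::nat\<times>nat. fst p \<noteq> snd p}. {t. poly (D (fst p) (snd p)) t = 0}) \<union> {0,1}"
  have "countable Bad" unfolding Bad_def
    by (intro countable_Un countable_UN) (auto intro!: countable_finite poly_roots_finite Dnz)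
  then have "Bad \<noteq> UNIV" using uncountable_UNIV_complex by auto
  then obtain t where t: "t \<notin> Bad" by auto
  then have t01: "t \<noteq> 0" "t \<noteq> 1" by (auto simp: Bad_def)
  have tD: "poly (D n m) t \<noteq> 0" if "n \<noteq> m" for n m using t that by (auto simp: Bad_def)
  define Orb where "Orb n = (lattes t ^^ n) (pt (ev t z0))" for n
  have Orb: "Orb (n+N) = pt (ev t (Z n)) \<and> ev t (Z n) \<noteq> (0,0)" for n
  proof -
    have "(stepP^^(n+N)) z0 = Z n" by (simp add: Z_def w_def funpow_add N[symmetric])
    then show ?thesis using lattes_iter[OF t01 nz[of t], of "n+N"] unfolding Orb_def by (simp add: ev_iter[symmetric])
  qed
  have inj: "inj (\<lambda>n. Orb (n+N))"
  proof (rule injI)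
    fix n m assume "Orb (n+N) = Orb (m+N)"
    then have "fst (ev t (Z n)) * snd (ev t (Z m)) = fst (ev t (Z m)) * snd (ev t (Z n))"
      using Orb[of n] Orb[of m] pt_eq by metis
    then have "poly (D n m) t = 0" by (simp add: D_def ev_def)
    then show "n = m" using tD by blast
  qed
  have "infinite (range (\<lambda>n. Orb (n+N)))" using inj finite_imageD by blast
  moreover have "range (\<lambda>n. Orb (n+N)) \<subseteq> range Orb" by auto
  ultimately have "infinite (range Orb)" using finite_subset by blast
  then show ?thesis using t01 unfolding Orb_def by blast
qed


lemma only_root:
  fixes p :: "complex poly"
  assumes p: "p \<noteq> 0" and r: "\<And>t. poly p t = 0 \<Longrightarrow> t = r"
  shows "\<exists>a d. a \<noteq> 0 \<and> (\<forall>t. poly p t = a * (t - r)^d)"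
proof -
  obtain B where B: "p = [:-r,1:]^order r p * B" "\<not> [:-r,1:] dvd B"
    using order_decomp[OF p] by blast
  have nr: "poly B z \<noteq> 0" for z
  proof
    assume "poly B z = 0"
    then have "poly p z = 0" by (subst B(1)) simp
    then have "z = r" by (rule r)
    then show False using B(2) \<open>poly B z = 0\<close> by (simp add: poly_eq_0_iff_dvd)
  qed
  then obtain a l where al: "a \<noteq> 0" "l = 0" "B = pCons a l"
    using fundamental_theorem_of_algebra_alt[of B] by blast
  show ?thesis
    by (rule exI[of _ a], rule exI[of _ "order r p"]) (use al in \<open>subst B(1), simp add: mult.commute\<close>)
qed

lemma poly_good_point:
  fixes p :: "complex poly"
  assumes p0: "p \<noteq> 0" and p1: "p \<noteq> 1" and pX: "p \<noteq> [:0,1:]"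
  shows "\<exists>t0. (poly p t0 = 0 \<and> t0 \<noteq> 0) \<or> (poly p t0 = 1 \<and> t0 \<noteq> 1) \<or> (poly p t0 = t0 \<and> t0 \<noteq> 0 \<and> t0 \<noteq> 1)"
proof (rule ccontr)
  assume H: "\<not> ?thesis"
  then have r0: "\<And>t. poly p t = 0 \<Longrightarrow> t = 0" and r1: "\<And>t. poly p t = 1 \<Longrightarrow> t = 1"
    and rt: "\<And>t. poly p t = t \<Longrightarrow> t = 0 \<or> t = 1" by blast+
  obtain a d where ad0: "a \<noteq> 0" "\<forall>t. poly p t = a * (t - 0)^d" using only_root[OF p0 r0] by blast
  have ad: "a \<noteq> 0" "\<And>t. poly p t = a * t^d" using ad0 by auto
  show False
  proof (cases "d = 0")
    case True
    then have pc: "\<And>t. poly p t = a" using ad by simp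
    have "a \<noteq> 1"
    proof
      assume "a = 1" then have "poly p = poly 1" using pc by auto
      then show False using p1 poly_eq_poly_eq_iff by blast
    qed
    then show False using rt[of a] pc ad(1) by auto
  next
    case False
    have q0: "p - 1 \<noteq> 0" using p1 by simp
    have r1': "\<And>t. poly (p - 1) t = 0 \<Longrightarrow> t = 1" using r1 by simp
    obtain b j where bj0: "b \<noteq> 0" "\<forall>t. poly (p - 1) t = b * (t - 1)^j"
      using only_root[OF q0 r1'] by blast
    have bj: "b \<noteq> 0" "\<And>t. poly p t - 1 = b * (t - 1)^j" using bj0 by auto
    have z: "poly p 0 = 0" using ad False by simp
    show False
    proof (cases "j = 0")
      case True
      then have "b = -1" using bj(2)[of 0] z by simp
      then have "poly p = poly 0" using bj(2) True by (auto simp: fun_eq_iff)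
      then show False using p0 poly_eq_poly_eq_iff by blast
    next
      case j: False
      have "a = 1" using bj(2)[of 1] ad(2)[of 1] j by (simp add: zero_power)
      have e0: "-1 = b * (-1)^j" using bj(2)[of 0] z by simp
      have e2: "2^d - 1 = b" using bj(2)[of 2] ad(2)[of 2] \<open>a = 1\<close> by simp
      have "(b * (-1)^j)^2 = 1" using e0 by (metis power2_minus power_one)
      moreover have "((-1::complex)^j)^2 = ((-1)^2)^j" by (simp only: power_mult[symmetric] mult.commute)
      ultimately have "b^2 = 1" by (simp add: power_mult_distrib)
      then have "((2::complex)^d - 1)^2 = 1" using e2 by simp
      then have "(2::complex)^d * (2^d - 2) = 0" by (simp add: algebra_simps power2_eq_square)
      then have "(2::complex)^d = 2" by simp
      then have "(2::nat)^d = 2" by (metis of_nat_eq_of_nat_power_cancel_iff of_nat_numeral)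
      then have "d = 1" by (metis One_nat_def power_inject_exp power_one_right Suc_1 lessI)
      then have "poly p = poly [:0,1:]" using ad(2) \<open>a = 1\<close> by (auto simp: fun_eq_iff)
      then show False using pX poly_eq_poly_eq_iff by blast
    qed
  qed
qed


lemma orbit_to_None:
  assumes "lattes t x = None"
  shows "(lattes t ^^ n) x \<in> {x, None}"
proof (induction n)
  case 0 then show ?case by simp
next
  case (Suc n) then show ?case using assms by (auto simp: lattes_def)
qed

lemma finite_orbit_None: "lattes t x = None \<Longrightarrow> finite (range (\<lambda>n. (lattes t ^^ n) x))"
  by (rule finite_subset[of _ "{x, None}"]) (use orbit_to_None in auto)

lemma quot_X: "quot_of_fract (Fract [:0, 1:] (1::complex poly)) = ([:0,1:], 1)"
proof -
  have s: "snd (quot_of_fract (Fract [:0, 1:] (1::complex poly))) = 1"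
    by (rule snd_quot_of_fract_Fract_whole) simp
  have "Fract (fst (quot_of_fract (Fract [:0, 1:] (1::complex poly)))) 1 = Fract [:0,1:] 1"
    using Fract_quot_of_fract[of "Fract [:0, 1:] (1::complex poly)"] s by simp
  then have "fst (quot_of_fract (Fract [:0, 1:] (1::complex poly))) = [:0,1:]"
    by (simp add: eq_fract)
  with s show ?thesis by (simp add: prod_eq_iff)
qed

lemma eval_pt: "eval_ratfun r t = pt (ev t (quot_of_fract r))"
  by (simp add: eval_ratfun_def pt_def ev_def split: prod.splits)

lemma coprime_nz:
  fixes p q :: "complex poly"
  assumes "coprime p q"
  shows "(poly p t, poly q t) \<noteq> (0,0)"
proof
  assume "(poly p t, poly q t) = (0,0)"
  then have "[:-t,1:] dvd p" "[:-t,1:] dvd q" by (auto simp: poly_eq_0_iff_dvd)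
  then have "is_unit [:-t,1:]" using assms coprime_common_divisor by blast
  then show False by (auto simp: is_unit_poly_iff)
qed

theorem proposition1p4:
  fixes c :: marked_point
  shows "persistently_preperiodic c \<longleftrightarrow>
           c \<in> {Some 0, Some 1, None, Some (Fract [:0, 1:] 1)}"
proof
  assume "c \<in> {Some 0, Some 1, None, Some (Fract [:0, 1:] 1)}"
  then show "persistently_preperiodic c"
    unfolding persistently_preperiodic_def
    by (auto intro!: finite_orbit_None simp: eval_marked_def eval_ratfun_def quot_X lattes_def)
next
  assume pp: "persistently_preperiodic c"
  show "c \<in> {Some 0, Some 1, None, Some (Fract [:0, 1:] 1)}"
  proof (rule ccontr)
    assume nc: "c \<notin> {Some 0, Some 1, None, Some (Fract [:0, 1:] 1)}"
    then obtain r where c: "c = Some r" by (cases c) auto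
    have r0: "r \<noteq> 0" "r \<noteq> 1" "r \<noteq> Fract [:0,1:] 1" using nc c by auto
    obtain p q where pq: "quot_of_fract r = (p,q)" by (cases "quot_of_fract r")
    have cop: "coprime p q" using coprime_quot_of_fract[of r] pq by simp
    have q0: "q \<noteq> 0" using snd_quot_of_fract_nonzero[of r] pq by simp
    have nq: "normalize q = q" using normalize_snd_quot_of_fract[of r] pq by simp
    have rpq: "r = Fract p q" using Fract_quot_of_fract[of r] pq by simp
    have nz: "\<And>t. ev t (p,q) \<noteq> (0,0)" using coprime_nz[OF cop] by (simp add: ev_def)
    have orb: "eval_marked c t = pt (ev t (p,q))" for t
      by (simp add: c eval_marked_def eval_pt pq)
    have "\<exists>N t0 e k A B. k > 0 \<and> poly A t0 \<noteq> 0 \<and> poly B t0 \<noteq> 0 \<and>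
            (stepP^^N) (p,q) = ([:-t0,1:]^e*A, [:-t0,1:]^(e+k)*B)"
    proof (cases "degree q = 0")
      case False
      then obtain t0 where t0: "poly q t0 = 0"
        using fundamental_theorem_of_algebra_alt[of q] by fastforce
      obtain B where B: "q = [:-t0,1:]^order t0 q * B" "\<not> [:-t0,1:] dvd B"
        using order_decomp[OF q0] by blast
      have k: "order t0 q > 0" using t0 q0 order_root by blast
      have pt0: "poly p t0 \<noteq> 0" using nz[of t0] t0 by (simp add: ev_def)
      have Bt0: "poly B t0 \<noteq> 0" using B(2) by (simp add: poly_eq_0_iff_dvd)
      show ?thesis
        by (rule exI[of _ 0], rule exI[of _ t0], rule exI[of _ 0], rule exI[of _ "order t0 q"],
            rule exI[of _ p], rule exI[of _ B]) (use k pt0 Bt0 B(1) in simp)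
    next
      case True
      then have "is_unit q" using q0 by (simp add: is_unit_iff_degree)
      then have q1: "q = 1" using nq by (simp add: is_unit_normalize)
      have p0: "p \<noteq> 0" using r0 rpq q1 by (auto simp: Zero_fract_def)
      have p1: "p \<noteq> 1" using r0 rpq q1 by (auto simp: One_fract_def)
      have pX: "p \<noteq> [:0,1:]" using r0 rpq q1 by auto
      obtain t0 where t0: "(poly p t0 = 0 \<and> t0 \<noteq> 0) \<or> (poly p t0 = 1 \<and> t0 \<noteq> 1) \<or> (poly p t0 = t0 \<and> t0 \<noteq> 0 \<and> t0 \<noteq> 1)"
        using poly_good_point[OF p0 p1 pX] by blast
      define P where "P = (p^2 - [:0,1:])^2"
      define Q where "Q = 4*p*(p-1)*(p-[:0,1:])"
      have st1: "(stepP^^1) (p,q) = stepP (p,1)" by (simp add: q1)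
      have "stepP (p,1) = (P, Q)" unfolding stepP_def P_def Q_def
        by (simp only: prod.case power_one mult_1_right)
      with st1 have st: "(stepP^^1) (p,q) = (P, Q)" by simp
      have Q0: "Q \<noteq> 0" using p0 p1 pX by (simp add: Q_def)
      have Qt0: "poly Q t0 = 0" using t0 by (auto simp: Q_def)
      have Pt0: "poly P t0 \<noteq> 0"
      proof
        assume "poly P t0 = 0"
        then have e: "(poly p t0)^2 = t0" by (simp add: P_def)
        show False using t0
        proof (elim disjE conjE)
          assume "poly p t0 = 0" "t0 \<noteq> 0" then show False using e by simp
        next
          assume "poly p t0 = 1" "t0 \<noteq> 1" then show False using e by simp
        next
          assume a: "poly p t0 = t0" "t0 \<noteq> 0" "t0 \<noteq> 1"
          then have "t0 * (t0 - 1) = 0" using e by (simp add: algebra_simps power2_eq_square)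
          then show False using a by simp
        qed
      qed
      obtain B where B: "Q = [:-t0,1:]^order t0 Q * B" "\<not> [:-t0,1:] dvd B"
        using order_decomp[OF Q0] by blast
      have k: "order t0 Q > 0" using Qt0 Q0 order_root by blast
      have Bt0: "poly B t0 \<noteq> 0" using B(2) by (simp add: poly_eq_0_iff_dvd)
      show ?thesis
        by (rule exI[of _ 1], rule exI[of _ t0], rule exI[of _ 0], rule exI[of _ "order t0 Q"],
            rule exI[of _ P], rule exI[of _ B]) (use k Pt0 Bt0 B(1) st in simp)
    qed
    then obtain N t0 e k A B where H: "k > 0" "poly A t0 \<noteq> 0" "poly B t0 \<noteq> 0"
        "(stepP^^N) (p,q) = ([:-t0,1:]^e*A, [:-t0,1:]^(e+k)*B)" by blast
    obtain t where t: "t \<noteq> 0" "t \<noteq> 1" "infinite (range (\<lambda>n. (lattes t ^^ n) (pt (ev t (p,q)))))"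
      using infinite_orbit[OF nz H] by blast
    then show False using pp unfolding persistently_preperiodic_def orb by blast
  qed
qed

end
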